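(* Under the setting of the context, assume (TS1) and let $u$ be the solution of problem (P). Let $x\in\mu_x\mathbb{N}$ and suppose $u(x-\mu_x,t)\ge0$ for all $t\in\mathbb{T}$ and $u(x-\mu_x,t)>0$ for at least one $t\in\mathbb{T}$. Then $u(x,t)\ge0$ for all $t\in\mathbb{T}$.
   Context: A time scale $\mathbb{T}$ is a nonempty closed subset of $\mathbb{R}$; here $\min\mathbb{T}=0$ and $\sup\mathbb{T}=+\infty$. $\sigma(t)=\inf\{s\in\mathbb{T}:s>t\}$ is the forward jump and $\mu_t(t)=\sigma(t)-t$ the graininess; $u^{\Delta_t}$ denotes the (Hilger) delta derivative in $t$. Fix $A>0$, $k>0$, $\mu_x>0$, $\Omega=\mu_x\mathbb{Z}\times\mathbb{T}$, $\mu_x\mathbb{N}=\{\mu_x,2\mu_x,\dots\}$. Problem (P): $u^{\Delta_t}(x,t)+k\frac{u(x,t)-u(x-\mu_x,t)}{\mu_x}=0$ for $(x,t)\in\Omega$, $u(0,0)=A$, $u(x,0)=0$ for $x\ne0$. A solution is $u:\Omega\to\mathbb{R}$ with each $u(x,\cdot)$ delta differentiable on $\mathbb{T}$, satisfying (P), and bounded on $\mu_x\mathbb{Z}\times(\mathbb{T}\cap[0,T_0])$ for every $T_0>0$. Condition (TS1): $1-\frac{k\mu_t(t)}{\mu_x}>0$ for all $t\in\mathbb{T}$. *)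

theory Defs
  imports Complex_Main
begin

definition time_scale0 :: "real set \<Rightarrow> bool" where
  "time_scale0 TS \<longleftrightarrow> closed TS \<and> 0 \<in> TS \<and> (\<forall>t\<in>TS. 0 \<le> t) \<and> (\<forall>r. \<exists>t\<in>TS. r < t)"

definition fwd_jump :: "real set \<Rightarrow> real \<Rightarrow> real" where
  "fwd_jump TS t = Inf {s \<in> TS. s > t}"

definition graininess :: "real set \<Rightarrow> real \<Rightarrow> real" where
  "graininess TS t = fwd_jump TS t - t"

definition has_delta_derivative :: "real set \<Rightarrow> (real \<Rightarrow> real) \<Rightarrow> real \<Rightarrow> real \<Rightarrow> bool" where
  "has_delta_derivative TS f D t \<longleftrightarrow>
     (\<forall>\<epsilon>>0. \<exists>\<delta>>0. \<forall>s\<in>TS. \<bar>s - t\<bar> < \<delta> \<longrightarrow>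
        \<bar>f (fwd_jump TS t) - f s - D * (fwd_jump TS t - s)\<bar> \<le> \<epsilon> * \<bar>fwd_jump TS t - s\<bar>)"

definition delta_differentiable_on :: "real set \<Rightarrow> (real \<Rightarrow> real) \<Rightarrow> bool" where
  "delta_differentiable_on TS f \<longleftrightarrow> (\<forall>t\<in>TS. \<exists>D. has_delta_derivative TS f D t)"

definition grid :: "real \<Rightarrow> real set" where
  "grid mx = {mx * of_int j | j. True}"

text \<open>The equation u^Delta(x,t) + k (u(x,t) - u(x-mu_x,t))/mu_x = 0 says that
  u(x,.) has delta derivative -k (u(x,t) - u(x-mu_x,t))/mu_x at t.\<close>
definition is_solution_P ::
  "real set \<Rightarrow> real \<Rightarrow> real \<Rightarrow> real \<Rightarrow> (real \<Rightarrow> real \<Rightarrow> real) \<Rightarrow> bool" where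
  "is_solution_P TS A k mx u \<longleftrightarrow>
     (\<forall>x\<in>grid mx. delta_differentiable_on TS (u x)) \<and>
     (\<forall>x\<in>grid mx. \<forall>t\<in>TS.
        has_delta_derivative TS (u x) (- (k * (u x t - u (x - mx) t) / mx)) t) \<and>
     u 0 0 = A \<and>
     (\<forall>x\<in>grid mx. x \<noteq> 0 \<longrightarrow> u x 0 = 0) \<and>
     (\<forall>T0>0. \<exists>M. \<forall>x\<in>grid mx. \<forall>t\<in>TS. t \<le> T0 \<longrightarrow> \<bar>u x t\<bar> \<le> M)"

end

theory Submission
  imports Defs "HOL-Analysis.Analysis"
begin

lemma dd_step:
  assumes d: "has_delta_derivative TS f D t" and t: "t \<in> TS"
  shows "f (fwd_jump TS t) = f t + D * (fwd_jump TS t - t)"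
proof (rule ccontr)
  define X where "X = f (fwd_jump TS t) - f t - D * (fwd_jump TS t - t)"
  define m where "m = \<bar>fwd_jump TS t - t\<bar>"
  assume "\<not> ?thesis"
  hence X0: "X \<noteq> 0" unfolding X_def by simp
  define e where "e = \<bar>X\<bar> / (2 * (m + 1))"
  have m0: "m \<ge> 0" unfolding m_def by simp
  have e0: "e > 0" unfolding e_def using X0 m0 by simp
  then obtain \<delta> where "\<delta> > 0" and h: "\<forall>s\<in>TS. \<bar>s - t\<bar> < \<delta> \<longrightarrow>
        \<bar>f (fwd_jump TS t) - f s - D * (fwd_jump TS t - s)\<bar> \<le> e * \<bar>fwd_jump TS t - s\<bar>"
    using d unfolding has_delta_derivative_def by blast
  hence "\<bar>X\<bar> \<le> e * m" using t unfolding X_def m_def by auto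
  moreover have "e * m < \<bar>X\<bar>"
  proof -
    have "e * m = \<bar>X\<bar> * (m / (2 * (m + 1)))" unfolding e_def by simp
    moreover have "m / (2 * (m + 1)) < 1" using m0 by (simp add: field_simps)
    moreover have "\<bar>X\<bar> > 0" using X0 by simp
    ultimately have "e * m < \<bar>X\<bar> * 1" by (metis mult_strict_left_mono)
    thus ?thesis by simp
  qed
  ultimately show False by simp
qed

lemma dd_cont:
  assumes d: "has_delta_derivative TS f D t" and t: "t \<in> TS" and g: "\<gamma> > 0"
  shows "\<exists>\<delta>>0. \<forall>s\<in>TS. \<bar>s - t\<bar> < \<delta> \<longrightarrow> \<bar>f t - f s\<bar> \<le> \<gamma>"
proof -
  define m where "m = \<bar>fwd_jump TS t - t\<bar>"
  define \<sigma> where "\<sigma> = fwd_jump TS t"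
  have m0: "m \<ge> 0" unfolding m_def by simp
  define e where "e = \<gamma> / (2 * (2 * m + 1))"
  have e0: "e > 0" unfolding e_def using g m0 by simp
  then obtain \<delta> where dp: "\<delta> > 0" and h: "\<forall>s\<in>TS. \<bar>s - t\<bar> < \<delta> \<longrightarrow>
        \<bar>f \<sigma> - f s - D * (\<sigma> - s)\<bar> \<le> e * \<bar>\<sigma> - s\<bar>"
    using d unfolding has_delta_derivative_def \<sigma>_def by blast
  define \<delta>' where "\<delta>' = min \<delta> (min 1 (\<gamma> / (2 * (\<bar>D\<bar> + 1))))"
  have "\<delta>' > 0" unfolding \<delta>'_def using dp g by simp
  moreover have "\<bar>f t - f s\<bar> \<le> \<gamma>" if s: "s \<in> TS" "\<bar>s - t\<bar> < \<delta>'" for s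
  proof -
    have h1: "\<bar>f \<sigma> - f s - D * (\<sigma> - s)\<bar> \<le> e * \<bar>\<sigma> - s\<bar>"
      using h s \<delta>'_def by auto
    have h2: "\<bar>f \<sigma> - f t - D * (\<sigma> - t)\<bar> \<le> e * m"
      using h t dp unfolding m_def \<sigma>_def by auto
    have st: "\<bar>s - t\<bar> < 1" "\<bar>s - t\<bar> < \<gamma> / (2 * (\<bar>D\<bar> + 1))" using s \<delta>'_def by auto
    have "\<bar>\<sigma> - s\<bar> \<le> m + \<bar>s - t\<bar>" unfolding m_def \<sigma>_def by simp
    hence "e * \<bar>\<sigma> - s\<bar> \<le> e * (m + 1)" using st e0
      by (smt (verit) mult_left_mono)
    have "\<bar>f t - f s\<bar> \<le> \<bar>D\<bar> * \<bar>s - t\<bar> + e * \<bar>\<sigma> - s\<bar> + e * m"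
    proof -
      have "f t - f s = (f \<sigma> - f s - D * (\<sigma> - s)) - (f \<sigma> - f t - D * (\<sigma> - t)) + D * (t - s)"
        by (simp add: algebra_simps)
      hence "\<bar>f t - f s\<bar> \<le> \<bar>f \<sigma> - f s - D * (\<sigma> - s)\<bar> + \<bar>f \<sigma> - f t - D * (\<sigma> - t)\<bar> + \<bar>D * (t - s)\<bar>"
        by (smt (verit))
      moreover have "\<bar>D * (t - s)\<bar> = \<bar>D\<bar> * \<bar>s - t\<bar>" by (simp add: abs_mult abs_minus_commute)
      ultimately show ?thesis using h1 h2 by linarith
    qed
    moreover have "\<bar>D\<bar> * \<bar>s - t\<bar> \<le> \<gamma> / 2"
    proof -
      have "\<bar>D\<bar> * \<bar>s - t\<bar> \<le> (\<bar>D\<bar> + 1) * (\<gamma> / (2 * (\<bar>D\<bar> + 1)))"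
        using st(2) by (intro mult_mono) auto
      also have "\<dots> = \<gamma> / 2" using abs_ge_zero[of D] by (simp add: divide_simps)
      finally show ?thesis .
    qed
    moreover have "e * (m + 1) + e * m \<le> \<gamma> / 2"
    proof -
      have "e * (m + 1) + e * m = e * (2 * m + 1)" by (simp add: algebra_simps)
      also have "\<dots> = \<gamma> / 2"
      proof -
        have "2 * m + 1 \<noteq> 0" using m0 by linarith
        thus ?thesis unfolding e_def by (simp add: field_simps)
      qed
      finally show ?thesis by simp
    qed
    ultimately show ?thesis using \<open>e * \<bar>\<sigma> - s\<bar> \<le> e * (m + 1)\<close> by linarith
  qed
  ultimately show ?thesis by blast
qed

lemma key:
  fixes v w :: "real \<Rightarrow> real"
  assumes cl: "closed TS" and z: "0 \<in> TS" and nn: "\<forall>t\<in>TS. 0 \<le> t"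
    and unb: "\<forall>r. \<exists>t\<in>TS. r < t"
    and c: "c > 0" and ts1: "\<forall>t\<in>TS. 1 - c * graininess TS t > 0"
    and w: "\<forall>t\<in>TS. w t \<ge> 0" and v0: "v 0 = 0"
    and der: "\<forall>t\<in>TS. has_delta_derivative TS v (- (c * (v t - w t))) t"
    and ep: "\<epsilon> > 0"
  shows "\<forall>t\<in>TS. v t \<ge> - \<epsilon> * (1 + t)"
proof (rule ccontr)
  assume "\<not> ?thesis"
  then obtain t1 where t1: "t1 \<in> TS" "v t1 < - \<epsilon> * (1 + t1)" by force
  define B where "B = {t\<in>TS. v t < - \<epsilon> * (1 + t)}"
  define a where "a = Inf B"
  have Bne: "B \<noteq> {}" using t1 B_def by auto
  have bdd: "bdd_below B" unfolding B_def bdd_below_def using nn by auto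
  have aTS: "a \<in> TS"
  proof -
    have "a \<in> closure B" unfolding a_def using closure_contains_Inf Bne bdd by blast
    moreover have "closure B \<subseteq> TS" using closure_minimal[of B TS] cl B_def by auto
    ultimately show ?thesis by blast
  qed
  have a0: "a \<ge> 0" using nn aTS by auto
  have lowB: "\<And>b. b \<in> B \<Longrightarrow> a \<le> b" unfolding a_def using bdd by (simp add: cInf_lower)
  have below: "\<And>s. s \<in> TS \<Longrightarrow> s < a \<Longrightarrow> v s \<ge> - \<epsilon> * (1 + s)"
    using lowB B_def by (auto simp: not_le[symmetric])
  have va: "v a \<ge> - \<epsilon> * (1 + a)"
  proof (cases "a = 0")
    case True then show ?thesis using v0 ep by simp
  next
    case False
    hence apos: "a > 0" using a0 by simp
    define L where "L = {s\<in>TS. s < a}"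
    have Lne: "L \<noteq> {}" using z apos L_def by auto
    have bddL: "bdd_above L" unfolding L_def bdd_above_def by (auto intro: less_imp_le)
    define p where "p = Sup L"
    have pa: "p \<le> a" unfolding p_def using Lne L_def by (auto intro!: cSup_least)
    have pTS: "p \<in> TS"
    proof -
      have "p \<in> closure L" unfolding p_def using closure_contains_Sup Lne bddL by blast
      moreover have "closure L \<subseteq> TS" using closure_minimal[of L TS] cl L_def by auto
      ultimately show ?thesis by blast
    qed
    show ?thesis
    proof (cases "p < a")
      case True
      have upL: "\<And>s. s \<in> L \<Longrightarrow> s \<le> p" unfolding p_def using bddL by (simp add: cSup_upper)
      have sig: "fwd_jump TS p = a"
        unfolding fwd_jump_def
      proof (rule cInf_eq_minimum)
        show "a \<in> {s \<in> TS. s > p}" using aTS True by simp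
        fix s assume "s \<in> {s \<in> TS. s > p}"
        then show "a \<le> s" using upL[of s] L_def by (auto simp: not_less[symmetric])
      qed
      have st: "v a = v p + (- (c * (v p - w p))) * (a - p)"
        using dd_step[OF der[rule_format, OF pTS] pTS] sig by simp
      have g: "graininess TS p = a - p" unfolding graininess_def sig by simp
      have q: "1 - c * (a - p) > 0" using ts1 pTS g by auto
      have cp: "c * (a - p) \<ge> 0" using c True by simp
      have vae: "v a = v p * (1 - c * (a - p)) + c * (a - p) * w p"
        using st by (simp add: algebra_simps)
      have wp: "c * (a - p) * w p \<ge> 0" using cp w pTS by simp
      show ?thesis
      proof (cases "v p \<ge> 0")
        case True
        hence "v p * (1 - c * (a - p)) \<ge> 0" using q by simp
        moreover have "\<epsilon> * (1 + a) \<ge> 0" using ep a0 by simp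
        ultimately show ?thesis using vae wp by linarith
      next
        case False
        hence "v p * (1 - c * (a - p)) \<ge> v p" using cp
        proof -
          have "v p * (c * (a - p)) \<le> 0" using False cp by (simp add: mult_nonpos_nonneg)
          thus ?thesis by (simp add: algebra_simps)
        qed
        moreover have "v p \<ge> - \<epsilon> * (1 + p)" using below pTS True by simp
        moreover have "\<epsilon> * (1 + p) \<le> \<epsilon> * (1 + a)" using pa ep by (intro mult_left_mono) auto
        ultimately show ?thesis using vae wp by linarith
      qed
    next
      case False
      hence pae: "p = a" using pa by simp
      show ?thesis
      proof (rule ccontr)
        assume nv: "\<not> ?thesis"
        define X where "X = - \<epsilon> * (1 + a) - v a"
        have X0: "X > 0" using nv X_def by simp
        obtain \<delta> where dp: "\<delta> > 0" and hd: "\<forall>s\<in>TS. \<bar>s - a\<bar> < \<delta> \<longrightarrow> \<bar>v a - v s\<bar> \<le> X / 2"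
          using dd_cont[OF der[rule_format, OF aTS] aTS, of "X/2"] X0 half_gt_zero by blast
        have "a - \<delta> < Sup L" using pae p_def dp by simp
        then obtain s where s: "s \<in> L" "a - \<delta> < s" using less_cSupD[OF Lne] by blast
        have sTS: "s \<in> TS" "s < a" using s L_def by auto
        have "\<bar>s - a\<bar> < \<delta>" using sTS s by simp
        hence "\<bar>v a - v s\<bar> \<le> X / 2" using hd sTS by blast
        moreover have "v s \<ge> - \<epsilon> * (1 + s)" using below sTS by blast
        moreover have "\<epsilon> * (1 + s) \<le> \<epsilon> * (1 + a)" using sTS ep by (intro mult_left_mono) auto
        ultimately show False using X_def X0 by linarith
      qed
    qed
  qed
  have anB: "a \<notin> B" using va B_def by auto
  have sig: "fwd_jump TS a = a"
  proof -
    have ne: "{s\<in>TS. s > a} \<noteq> {}" using unb by auto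
    have "fwd_jump TS a \<ge> a" unfolding fwd_jump_def
      by (rule cInf_greatest[OF ne]) auto
    moreover have "fwd_jump TS a \<le> a"
    proof -
      have sub: "B \<subseteq> {s\<in>TS. s > a}"
      proof
        fix b assume b: "b \<in> B"
        have "a \<le> b" using lowB b by blast
        moreover have "b \<noteq> a" using anB b by blast
        moreover have "b \<in> TS" using b B_def by blast
        ultimately show "b \<in> {s\<in>TS. s > a}" by simp
      qed
      have "bdd_below {s\<in>TS. s > a}" unfolding bdd_below_def by (auto intro: less_imp_le)
      hence "Inf {s\<in>TS. s > a} \<le> Inf B" using cInf_superset_mono[OF Bne _ sub] by blast
      thus ?thesis unfolding fwd_jump_def a_def .
    qed
    ultimately show ?thesis by simp
  qed
  define D where "D = - (c * (v a - w a))"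
  obtain \<delta> where dp: "\<delta> > 0" and hd: "\<forall>s\<in>TS. \<bar>s - a\<bar> < \<delta> \<longrightarrow>
        \<bar>v a - v s - D * (a - s)\<bar> \<le> \<epsilon> * \<bar>a - s\<bar>"
  proof -
    have "has_delta_derivative TS v D a" using der aTS D_def by simp
    hence "\<forall>\<epsilon>>0. \<exists>\<delta>>0. \<forall>s\<in>TS. \<bar>s - a\<bar> < \<delta> \<longrightarrow>
        \<bar>v a - v s - D * (a - s)\<bar> \<le> \<epsilon> * \<bar>a - s\<bar>"
      unfolding has_delta_derivative_def sig .
    thus ?thesis using that ep by blast
  qed
  have ext: "\<exists>\<delta>'>0. \<forall>s\<in>TS. a < s \<and> s < a + \<delta>' \<longrightarrow> v s \<ge> - \<epsilon> * (1 + s)"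
  proof (cases "D \<ge> 0")
    case True
    show ?thesis
    proof (intro exI[of _ \<delta>] conjI ballI impI)
      fix s assume s: "s \<in> TS" "a < s \<and> s < a + \<delta>"
      hence h: "\<bar>v a - v s - D * (a - s)\<bar> \<le> \<epsilon> * (s - a)" using hd by auto
      have "D * (s - a) \<ge> 0" using True s by simp
      hence "v s \<ge> v a - \<epsilon> * (s - a)" using h by (simp add: algebra_simps abs_le_iff)
      thus "v s \<ge> - \<epsilon> * (1 + s)" using va by (simp add: algebra_simps)
    qed (use dp in auto)
  next
    case False
    hence "c * (v a - w a) > 0" using D_def by simp
    hence "v a - w a > 0" using c by (simp add: zero_less_mult_iff)
    hence vpos: "v a > 0" using w aTS by force
    define \<delta>' where "\<delta>' = min \<delta> (v a / (- D))"
    have "v a / (- D) > 0" using vpos False by (intro divide_pos_pos) auto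
    hence "\<delta>' > 0" unfolding \<delta>'_def using dp by simp
    moreover have "v s \<ge> - \<epsilon> * (1 + s)" if s: "s \<in> TS" "a < s \<and> s < a + \<delta>'" for s
    proof -
      have h: "\<bar>v a - v s - D * (a - s)\<bar> \<le> \<epsilon> * (s - a)" using hd s \<delta>'_def by auto
      have "s - a < v a / (- D)" using s \<delta>'_def by auto
      hence "(- D) * (s - a) < v a" using False by (simp add: field_simps)
      hence "v s \<ge> - \<epsilon> * (s - a)" using h by (simp add: algebra_simps abs_le_iff)
      moreover have "\<epsilon> * a \<ge> 0" using ep a0 by simp
      ultimately show ?thesis using ep by (simp add: algebra_simps)
    qed
    ultimately show ?thesis by blast
  qed
  then obtain \<delta>' where dp': "\<delta>' > 0" and hx: "\<forall>s\<in>TS. a < s \<and> s < a + \<delta>' \<longrightarrow> v s \<ge> - \<epsilon> * (1 + s)"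
    by blast
  have "\<And>b. b \<in> B \<Longrightarrow> a + \<delta>' \<le> b"
  proof -
    fix b assume b: "b \<in> B"
    have "a \<le> b" using lowB b by simp
    moreover have "b \<noteq> a" using anB b by auto
    moreover have "\<not> (v b \<ge> - \<epsilon> * (1 + b))" using b B_def by auto
    moreover have "b \<in> TS" using b B_def by blast
    ultimately show "a + \<delta>' \<le> b" using hx by (meson linorder_not_le order_le_less)
  qed
  hence "a + \<delta>' \<le> a" unfolding a_def using Bne by (intro cInf_greatest) auto
  thus False using dp' by simp
qed

theorem mainTheorem8:
  fixes TS :: "real set" and A k mx x :: real and u :: "real \<Rightarrow> real \<Rightarrow> real"
  assumes "time_scale0 TS"
    and "A > 0" and "k > 0" and "mx > 0"
    and TS1: "\<forall>t\<in>TS. 1 - k * graininess TS t / mx > 0"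
    and sol: "is_solution_P TS A k mx u"
    and hx: "\<exists>n::nat. n \<ge> 1 \<and> x = mx * of_nat n"
    and nonneg: "\<forall>t\<in>TS. u (x - mx) t \<ge> 0"
    and pos: "\<exists>t\<in>TS. u (x - mx) t > 0"
  shows "\<forall>t\<in>TS. u x t \<ge> 0"
proof
  fix t assume tTS: "t \<in> TS"
  obtain n :: nat where n: "n \<ge> 1" "x = mx * of_nat n" using hx by blast
  have xg: "x \<in> grid mx" unfolding grid_def using n by (auto intro!: exI[of _ "int n"])
  have xnz: "x \<noteq> 0" using n \<open>mx > 0\<close> by simp
  have ts: "closed TS" "0 \<in> TS" "\<forall>t\<in>TS. 0 \<le> t" "\<forall>r. \<exists>t\<in>TS. r < t"
    using assms(1) unfolding time_scale0_def by auto
  have c: "k / mx > 0" using assms by simp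
  have ts1: "\<forall>t\<in>TS. 1 - (k / mx) * graininess TS t > 0" using TS1 by simp
  have v0: "u x 0 = 0" using sol xg xnz unfolding is_solution_P_def by auto
  have der: "\<forall>t\<in>TS. has_delta_derivative TS (u x) (- ((k / mx) * (u x t - u (x - mx) t))) t"
    using sol xg unfolding is_solution_P_def by simp
  have all: "\<And>\<epsilon>. \<epsilon> > 0 \<Longrightarrow> u x t \<ge> - \<epsilon> * (1 + t)"
    using key[OF ts c ts1 nonneg v0 der] tTS by blast
  show "u x t \<ge> 0"
  proof (rule ccontr)
    assume "\<not> u x t \<ge> 0"
    hence neg: "u x t < 0" by simp
    have t0: "t \<ge> 0" using ts tTS by auto
    define e where "e = - u x t / (2 * (1 + t))"
    have "e > 0" unfolding e_def using neg t0 by (intro divide_pos_pos) auto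
    hence "u x t \<ge> - e * (1 + t)" using all by blast
    also have "- e * (1 + t) = u x t / 2" unfolding e_def using t0 by (simp add: field_simps)
    finally show False using neg by simp
  qed
qed

end
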